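(* In any weighted graph on $n$ vertices with $\mathsf{OPT}^{\mathsf{IR}}<\mathsf{OPT}^{\mathsf{stable}}$, there exists a persuasive signaling scheme with at most $n+1$ signals (i.e., $|\Sigma|\le n+1$) whose cost is strictly lower than $\mathsf{OPT}^{\mathsf{stable}}$.
   Context: Setting. $V$ is a finite set of $n$ task types and $W=(W_{u,v})_{u,v\in V}$ is a symmetric matrix with entries in $[0,1]$ and $W_{v,v}=1$ for all $v$ (the weighted graph has edges $\{u,v\}$, $u\ne v$, with $W_{u,v}>0$ and weight $W_{u,v}$). A vector $\theta\in\mathbb{R}_{\ge0}^V$ is feasible if $W\theta\ge\mathbf 1$ coordinatewise, and stable if it is feasible and for every $v$, $\theta_v=\min\{x\ge0: x+\sum_{v'\neq v}W_{v,v'}\theta_{v'}\ge1\}$. $\mathsf{OPT}^{\mathsf{IR}}=\min\{\|\theta\|_1:\theta\in[0,1]^V\text{ feasible}\}$ and $\mathsf{OPT}^{\mathsf{stable}}=\min\{\|\theta\|_1:\theta\text{ stable}\}$. Signaling. There are $n$ agents; the type profile $t=(t_1,\dots,t_n)$ is a uniformly random bijection $[n]\to V$. A signaling scheme with finite signal space $\Sigma\subset[0,1]$ is a map $\varphi$ assigning to each bijection $t$ a distribution $\varphi(t)$ on $\Sigma^V$; given $t$, $s\sim\varphi(t)$ is drawn and agent $i$ privately receives $s_{t_i}$. For agent $i$, a signal $\theta\in\Sigma$ with $\Pr[s_{t_i}=\theta]>0$ and $x\ge0$, let $Q_i(x\mid\theta)=\mathbb{E}\big[x+\sum_{v'\neq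 t_i}W_{t_i,v'}s_{v'}\,\big|\,s_{t_i}=\theta\big]$. The scheme is persuasive if for every agent $i$ and every such $\theta$: $Q_i(\theta\mid\theta)\ge1$ and $\theta=\min\{x\ge0:Q_i(x\mid\theta)\ge1\}$. Its cost is $\mathbb{E}[\|s\|_1]$. *)

theory Defs
  imports "HOL-Probability.Probability"
begin

definition weight_matrix :: "'v set \<Rightarrow> ('v \<Rightarrow> 'v \<Rightarrow> real) \<Rightarrow> bool" where
  "weight_matrix V W \<longleftrightarrow> finite V \<and>
     (\<forall>u\<in>V. \<forall>v\<in>V. W u v = W v u \<and> 0 \<le> W u v \<and> W u v \<le> 1) \<and>
     (\<forall>v\<in>V. W v v = 1)"

definition feasible :: "'v set \<Rightarrow> ('v \<Rightarrow> 'v \<Rightarrow> real) \<Rightarrow> ('v \<Rightarrow> real) \<Rightarrow> bool" where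
  "feasible V W \<theta> \<longleftrightarrow> (\<forall>v\<in>V. 0 \<le> \<theta> v) \<and> (\<forall>v\<in>V. (\<Sum>u\<in>V. W v u * \<theta> u) \<ge> 1)"

definition stable :: "'v set \<Rightarrow> ('v \<Rightarrow> 'v \<Rightarrow> real) \<Rightarrow> ('v \<Rightarrow> real) \<Rightarrow> bool" where
  "stable V W \<theta> \<longleftrightarrow> feasible V W \<theta> \<and>
     (\<forall>v\<in>V. \<theta> v = (LEAST x::real. 0 \<le> x \<and> x + (\<Sum>v'\<in>V - {v}. W v v' * \<theta> v') \<ge> 1))"

definition OPT_IR :: "'v set \<Rightarrow> ('v \<Rightarrow> 'v \<Rightarrow> real) \<Rightarrow> real" where
  "OPT_IR V W = Inf ((\<lambda>\<theta>. \<Sum>v\<in>V. \<bar>\<theta> v\<bar>) `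
      {\<theta>. (\<forall>v\<in>V. 0 \<le> \<theta> v \<and> \<theta> v \<le> 1) \<and> feasible V W \<theta>})"

definition OPT_stable :: "'v set \<Rightarrow> ('v \<Rightarrow> 'v \<Rightarrow> real) \<Rightarrow> real" where
  "OPT_stable V W = Inf ((\<lambda>\<theta>. \<Sum>v\<in>V. \<bar>\<theta> v\<bar>) ` {\<theta>. stable V W \<theta>})"

text \<open>Type profiles: bijections from agents {0..<n} to V (extensional outside the agents).\<close>
definition profiles :: "nat \<Rightarrow> 'v set \<Rightarrow> (nat \<Rightarrow> 'v) set" where
  "profiles n V = {t. bij_betw t {..<n} V \<and> (\<forall>i. n \<le> i \<longrightarrow> t i = undefined)}"

text \<open>A signaling scheme with signal space Sig: to each profile a distribution on
  signal vectors s with s v in Sig for v in V (and s v = 0 outside V).\<close>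
definition signaling_scheme ::
  "nat \<Rightarrow> 'v set \<Rightarrow> real set \<Rightarrow> ((nat \<Rightarrow> 'v) \<Rightarrow> ('v \<Rightarrow> real) pmf) \<Rightarrow> bool" where
  "signaling_scheme n V Sig \<phi> \<longleftrightarrow> finite Sig \<and> Sig \<subseteq> {0..1} \<and>
     (\<forall>t\<in>profiles n V. set_pmf (\<phi> t) \<subseteq> {s. (\<forall>v\<in>V. s v \<in> Sig) \<and> (\<forall>v. v \<notin> V \<longrightarrow> s v = 0)})"

definition joint :: "nat \<Rightarrow> 'v set \<Rightarrow> ((nat \<Rightarrow> 'v) \<Rightarrow> ('v \<Rightarrow> real) pmf)
     \<Rightarrow> ((nat \<Rightarrow> 'v) \<times> ('v \<Rightarrow> real)) pmf" where
  "joint n V \<phi> = pmf_of_set (profiles n V) \<bind> (\<lambda>t. map_pmf (\<lambda>s. (t, s)) (\<phi> t))"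

definition cond_exp :: "'a pmf \<Rightarrow> 'a set \<Rightarrow> ('a \<Rightarrow> real) \<Rightarrow> real" where
  "cond_exp P A f = measure_pmf.expectation P (\<lambda>\<omega>. indicator A \<omega> * f \<omega>) / measure_pmf.prob P A"

definition sig_event :: "nat \<Rightarrow> real \<Rightarrow> ((nat \<Rightarrow> 'v) \<times> ('v \<Rightarrow> real)) set" where
  "sig_event i \<theta> = {(t, s). s (t i) = \<theta>}"

definition Q :: "nat \<Rightarrow> 'v set \<Rightarrow> ('v \<Rightarrow> 'v \<Rightarrow> real) \<Rightarrow> ((nat \<Rightarrow> 'v) \<Rightarrow> ('v \<Rightarrow> real) pmf)
     \<Rightarrow> nat \<Rightarrow> real \<Rightarrow> real \<Rightarrow> real" where
  "Q n V W \<phi> i x \<theta> = cond_exp (joint n V \<phi>) (sig_event i \<theta>)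
      (\<lambda>(t, s). x + (\<Sum>v'\<in>V - {t i}. W (t i) v' * s v'))"

definition persuasive :: "nat \<Rightarrow> 'v set \<Rightarrow> ('v \<Rightarrow> 'v \<Rightarrow> real) \<Rightarrow> real set
     \<Rightarrow> ((nat \<Rightarrow> 'v) \<Rightarrow> ('v \<Rightarrow> real) pmf) \<Rightarrow> bool" where
  "persuasive n V W Sig \<phi> \<longleftrightarrow>
     (\<forall>i<n. \<forall>\<theta>\<in>Sig. measure_pmf.prob (joint n V \<phi>) (sig_event i \<theta>) > 0 \<longrightarrow>
        Q n V W \<phi> i \<theta> \<theta> \<ge> 1 \<and> \<theta> = (LEAST x::real. 0 \<le> x \<and> Q n V W \<phi> i x \<theta> \<ge> 1))"

definition cost :: "nat \<Rightarrow> 'v set \<Rightarrow> ((nat \<Rightarrow> 'v) \<Rightarrow> ('v \<Rightarrow> real) pmf) \<Rightarrow> real" where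
  "cost n V \<phi> = measure_pmf.expectation (joint n V \<phi>) (\<lambda>(t, s). \<Sum>v\<in>V. \<bar>s v\<bar>)"

end

theory Submission
  imports Defs
begin


definition hsum :: "'v set \<Rightarrow> ('v \<Rightarrow> 'v \<Rightarrow> real) \<Rightarrow> ('v \<Rightarrow> real) \<Rightarrow> 'v \<Rightarrow> real" where
  "hsum V W \<theta> u = (\<Sum>w\<in>V - {u}. W u w * \<theta> w)"

lemma least_lemma: "(LEAST x::real. 0 \<le> x \<and> x + c \<ge> 1) = max 0 (1 - c)"
  by (rule Least_equality) (auto simp: max_def)

lemma least_lemma2: "(LEAST x::real. 0 \<le> x \<and> 1 \<le> x + c) = max 0 (1 - c)"
  by (rule Least_equality) (auto simp: max_def)

lemma sum_split_W:
  assumes "weight_matrix V W" "v \<in> V"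
  shows "(\<Sum>u\<in>V. W v u * \<theta> u) = \<theta> v + hsum V W \<theta> v"
proof -
  have fin: "finite V" using assms(1) by (simp add: weight_matrix_def)
  have "(\<Sum>u\<in>V. W v u * \<theta> u) = W v v * \<theta> v + (\<Sum>u\<in>V - {v}. W v u * \<theta> u)"
    using sum.remove[OF fin assms(2)] by blast
  then show ?thesis using assms by (simp add: weight_matrix_def hsum_def)
qed

lemma hsum_nonneg:
  assumes "weight_matrix V W" "v \<in> V" "\<And>u. u \<in> V \<Longrightarrow> 0 \<le> \<theta> u"
  shows "0 \<le> hsum V W \<theta> v"
  unfolding hsum_def using assms by (intro sum_nonneg mult_nonneg_nonneg) (auto simp: weight_matrix_def)

lemma stable_iff:
  assumes "weight_matrix V W"
  shows "stable V W \<theta> \<longleftrightarrow> (\<forall>v\<in>V. \<theta> v = max 0 (1 - hsum V W \<theta> v))"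
proof
  assume "stable V W \<theta>"
  then show "\<forall>v\<in>V. \<theta> v = max 0 (1 - hsum V W \<theta> v)"
    unfolding stable_def hsum_def by (simp only: least_lemma) blast
next
  assume H: "\<forall>v\<in>V. \<theta> v = max 0 (1 - hsum V W \<theta> v)"
  have "feasible V W \<theta>" unfolding feasible_def
  proof safe
    fix v assume "v \<in> V" then show "0 \<le> \<theta> v" using H by (metis max.cobounded1)
  next
    fix v assume v: "v \<in> V"
    have "\<theta> v \<ge> 1 - hsum V W \<theta> v" using H v by (metis max.cobounded2)
    then show "1 \<le> (\<Sum>u\<in>V. W v u * \<theta> u)" using sum_split_W[OF assms v, of \<theta>] by linarith
  qed
  then show "stable V W \<theta>" unfolding stable_def using H by (simp only: least_lemma hsum_def)
qed
definition Pot :: "'v set \<Rightarrow> ('v \<Rightarrow> 'v \<Rightarrow> real) \<Rightarrow> ('v \<Rightarrow> real) \<Rightarrow> real" where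
  "Pot V W \<theta> = (\<Sum>u\<in>V. \<Sum>w\<in>V. W u w * \<theta> u * \<theta> w) / 2 - (\<Sum>u\<in>V. \<theta> u)"

definition Rest :: "'v set \<Rightarrow> ('v \<Rightarrow> 'v \<Rightarrow> real) \<Rightarrow> ('v \<Rightarrow> real) \<Rightarrow> 'v \<Rightarrow> real" where
  "Rest V W \<theta> v = (\<Sum>u\<in>V - {v}. \<Sum>w\<in>V - {v}. W u w * \<theta> u * \<theta> w) / 2 - (\<Sum>u\<in>V - {v}. \<theta> u)"

lemma Pot_split:
  assumes wm: "weight_matrix V W" and v: "v \<in> V"
  shows "Pot V W \<theta> = \<theta> v ^ 2 / 2 + \<theta> v * hsum V W \<theta> v - \<theta> v + Rest V W \<theta> v"
proof -
  have fin: "finite V" using wm by (simp add: weight_matrix_def)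
  have sym: "\<And>u. u \<in> V \<Longrightarrow> W u v = W v u" using wm v by (simp add: weight_matrix_def)
  have 1: "(\<Sum>w\<in>V. W v w * \<theta> v * \<theta> w) = \<theta> v * (\<theta> v + hsum V W \<theta> v)"
  proof -
    have "(\<Sum>w\<in>V. W v w * \<theta> v * \<theta> w) = \<theta> v * (\<Sum>w\<in>V. W v w * \<theta> w)"
      by (simp add: sum_distrib_left mult.assoc mult.left_commute)
    then show ?thesis using sum_split_W[OF wm v, of \<theta>] by simp
  qed
  have 2: "\<And>u. u \<in> V - {v} \<Longrightarrow> (\<Sum>w\<in>V. W u w * \<theta> u * \<theta> w) =
      W v u * \<theta> u * \<theta> v + (\<Sum>w\<in>V - {v}. W u w * \<theta> u * \<theta> w)"
  proof -
    fix u assume u: "u \<in> V - {v}"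
    have "(\<Sum>w\<in>V. W u w * \<theta> u * \<theta> w) = W u v * \<theta> u * \<theta> v + (\<Sum>w\<in>V - {v}. W u w * \<theta> u * \<theta> w)"
      using sum.remove[OF fin v, of "\<lambda>w. W u w * \<theta> u * \<theta> w"] by simp
    then show "(\<Sum>w\<in>V. W u w * \<theta> u * \<theta> w) = W v u * \<theta> u * \<theta> v + (\<Sum>w\<in>V - {v}. W u w * \<theta> u * \<theta> w)"
      using sym u by simp
  qed
  have 3: "(\<Sum>u\<in>V - {v}. W v u * \<theta> u * \<theta> v) = \<theta> v * hsum V W \<theta> v"
    unfolding hsum_def by (simp add: sum_distrib_left algebra_simps)
  have "(\<Sum>u\<in>V. \<Sum>w\<in>V. W u w * \<theta> u * \<theta> w) =
      (\<Sum>w\<in>V. W v w * \<theta> v * \<theta> w) + (\<Sum>u\<in>V - {v}. \<Sum>w\<in>V. W u w * \<theta> u * \<theta> w)"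
    using sum.remove[OF fin v] by blast
  also have "\<dots> = \<theta> v * (\<theta> v + hsum V W \<theta> v) + \<theta> v * hsum V W \<theta> v
      + (\<Sum>u\<in>V - {v}. \<Sum>w\<in>V - {v}. W u w * \<theta> u * \<theta> w)"
    using 1 2 3 by (simp add: sum.distrib)
  finally have A: "(\<Sum>u\<in>V. \<Sum>w\<in>V. W u w * \<theta> u * \<theta> w) = \<theta> v * (\<theta> v + hsum V W \<theta> v) + \<theta> v * hsum V W \<theta> v
      + (\<Sum>u\<in>V - {v}. \<Sum>w\<in>V - {v}. W u w * \<theta> u * \<theta> w)" .
  have B: "(\<Sum>u\<in>V. \<theta> u) = \<theta> v + (\<Sum>u\<in>V - {v}. \<theta> u)" using sum.remove[OF fin v] by blast
  show ?thesis unfolding Pot_def Rest_def A B by (simp add: power2_eq_square algebra_simps)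
qed

lemma hsum_upd: "hsum V W (\<theta>(v := a)) v = hsum V W \<theta> v"
  unfolding hsum_def by (intro sum.cong) auto

lemma Rest_upd: "Rest V W (\<theta>(v := a)) v = Rest V W \<theta> v"
  unfolding Rest_def by (intro arg_cong2[where f="(-)"] arg_cong2[where f="(/)"] sum.cong) auto

lemma Pot_upd:
  assumes wm: "weight_matrix V W" and v: "v \<in> V"
  shows "Pot V W (\<theta>(v := a)) - Pot V W \<theta> = (a - \<theta> v) * (\<theta> v + hsum V W \<theta> v - 1) + (a - \<theta> v)^2 / 2"
proof -
  have E1: "Pot V W (\<theta>(v := a)) = a ^ 2 / 2 + a * hsum V W \<theta> v - a + Rest V W \<theta> v"
    using Pot_split[OF wm v, of "\<theta>(v := a)"] hsum_upd[of V W \<theta> v a] Rest_upd[of V W \<theta> v a] by simp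
  show ?thesis unfolding E1 Pot_split[OF wm v, of \<theta>] by (simp add: power2_eq_square field_simps)
qed


lemma K_compact:
  "compact {\<theta>::'v \<Rightarrow> real. \<forall>v. \<theta> v \<in> (if v \<in> V then {0..1} else {0})}"
proof -
  let ?S = "\<lambda>v. if v \<in> V then {0..1::real} else {0}"
  have eq: "{\<theta>::'v \<Rightarrow> real. \<forall>v. \<theta> v \<in> ?S v} = PiE UNIV ?S"
    by (auto simp: PiE_def Pi_def extensional_def)
  have "compactin (product_topology (\<lambda>_. euclidean) UNIV) (PiE UNIV ?S)"
    by (subst compactin_PiE) auto
  then show ?thesis unfolding eq euclidean_product_topology by simp
qed

lemma K_cont:
  fixes K :: "('v \<Rightarrow> real) set" and V :: "'v set"
  shows "continuous_on K (Pot V W)"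
proof -
  have c: "\<And>u. continuous_on K (\<lambda>\<theta>::'v \<Rightarrow> real. \<theta> u)"
    by (rule continuous_on_subset[OF continuous_on_product_coordinates]) simp
  show ?thesis unfolding Pot_def
    by (intro continuous_on_diff continuous_on_divide continuous_on_sum continuous_on_mult continuous_on_const c) auto
qed

lemma stable_exists:
  fixes V :: "'v set"
  assumes wm: "weight_matrix V W"
  shows "\<exists>\<theta>. stable V W \<theta> \<and> (\<forall>v. v \<notin> V \<longrightarrow> \<theta> v = 0)"
proof -
  define K where "K = {\<theta>::'v \<Rightarrow> real. \<forall>v. \<theta> v \<in> (if v \<in> V then {0..1} else {0})}"
  have "(\<lambda>_. 0) \<in> K" unfolding K_def by auto
  then obtain \<theta> where th: "\<theta> \<in> K" and min: "\<And>y. y \<in> K \<Longrightarrow> Pot V W \<theta> \<le> Pot V W y"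
    using continuous_attains_inf[OF K_compact[of V, folded K_def] _ K_cont[of K V W]] by blast
  have thK: "\<And>v. \<theta> v \<in> (if v \<in> V then {0..1} else {0})" using th unfolding K_def by blast
  have th01: "0 \<le> \<theta> v \<and> \<theta> v \<le> 1" if "v \<in> V" for v using thK[of v] that by simp
  have th0: "\<theta> v = 0" if "v \<notin> V" for v using thK[of v] that by simp
  have "\<forall>v\<in>V. \<theta> v = max 0 (1 - hsum V W \<theta> v)"
  proof
    fix v assume v: "v \<in> V"
    define h where "h = hsum V W \<theta> v"
    define D where "D = \<theta> v + h - 1"
    have h0: "0 \<le> h" unfolding h_def using hsum_nonneg[OF wm v] th01 by blast
    have key: "\<And>a. 0 \<le> a \<Longrightarrow> a \<le> 1 \<Longrightarrow> 0 \<le> (a - \<theta> v) * D + (a - \<theta> v)^2 / 2"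
    proof -
      fix a :: real assume a: "0 \<le> a" "a \<le> 1"
      have "\<theta>(v := a) \<in> K" unfolding K_def
      proof (intro CollectI allI)
        fix u show "(\<theta>(v := a)) u \<in> (if u \<in> V then {0..1} else {0})"
          using thK[of u] a v by (cases "u = v") auto
      qed
      then have "Pot V W \<theta> \<le> Pot V W (\<theta>(v := a))" by (rule min)
      then show "0 \<le> (a - \<theta> v) * D + (a - \<theta> v)^2 / 2"
        using Pot_upd[OF wm v, of \<theta> a] unfolding D_def h_def by linarith
    qed
    have Dge: "0 \<le> D"
    proof (rule ccontr)
      assume "\<not> 0 \<le> D"
      then have Dn: "D < 0" by simp
      have lt1: "\<theta> v < 1"
      proof (rule ccontr)
        assume "\<not> \<theta> v < 1" then have "\<theta> v = 1" using th01[OF v] by simp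
        then show False using Dn h0 unfolding D_def by simp
      qed
      define d where "d = min (1 - \<theta> v) (- D)"
      have d0: "0 < d" unfolding d_def using lt1 Dn by simp
      have d1: "d \<le> - D" "d \<le> 1 - \<theta> v" unfolding d_def by auto
      have "0 \<le> d * D + d^2 / 2" using key[of "\<theta> v + d"] th01[OF v] d0 d1 by simp
      moreover have "d * d \<le> d * (- D)" using d0 d1 by (intro mult_left_mono) auto
      moreover have "d * D < 0" using d0 Dn by (simp add: mult_pos_neg)
      ultimately show False by (simp add: power2_eq_square)
    qed
    have Dle: "0 < \<theta> v \<Longrightarrow> D \<le> 0"
    proof (rule ccontr)
      assume pos: "0 < \<theta> v" and "\<not> D \<le> 0"
      then have Dp: "0 < D" by simp
      define m where "m = min (\<theta> v) D"
      have m0: "0 < m" unfolding m_def using pos Dp by simp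
      have m1: "m \<le> D" "m \<le> \<theta> v" unfolding m_def by auto
      have "0 \<le> (- m) * D + (- m)^2 / 2" using key[of "\<theta> v - m"] th01[OF v] m0 m1 by simp
      moreover have "m * m \<le> m * D" using m0 m1 by (intro mult_left_mono) auto
      moreover have "0 < m * D" using m0 Dp by simp
      ultimately show False by (simp add: power2_eq_square)
    qed
    show "\<theta> v = max 0 (1 - hsum V W \<theta> v)"
    proof (cases "0 < \<theta> v")
      case True then show ?thesis using Dge Dle unfolding D_def h_def by simp
    next
      case False then have "\<theta> v = 0" using th01[OF v] by simp
      then show ?thesis using Dge unfolding D_def h_def by simp
    qed
  qed
  then have "stable V W \<theta>" using stable_iff[OF wm] by blast
  then show ?thesis using th0 by blast
qed



lemma prof_sub: "profiles n V \<subseteq> PiE {..<n} (\<lambda>_. V)"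
  unfolding profiles_def PiE_def extensional_def bij_betw_def by auto

lemma prof_finite: "finite V \<Longrightarrow> finite (profiles n V)"
  using finite_subset[OF prof_sub finite_PiE[of "{..<n}" "\<lambda>_. V"]] by auto

lemma prof_nonempty: assumes "finite V" "n = card V" shows "profiles n V \<noteq> {}"
proof -
  obtain h where h: "bij_betw h {0..<card V} V" using ex_bij_betw_nat_finite[OF assms(1)] by blast
  have h': "bij_betw h {..<n} V" using h assms(2) atLeast0LessThan by metis
  have "bij_betw (restrict h {..<n}) {..<n} V"
    using h' bij_betw_cong[of "{..<n}" "restrict h {..<n}" h V] by simp
  then have "restrict h {..<n} \<in> profiles n V" unfolding profiles_def by auto
  then show ?thesis by blast
qed

definition swp :: "nat \<Rightarrow> nat \<Rightarrow> nat \<Rightarrow> nat" where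
  "swp i j k = (if k = i then j else if k = j then i else k)"

lemma swp_bij: "i < n \<Longrightarrow> j < n \<Longrightarrow> bij_betw (swp i j) {..<n} {..<n}"
  unfolding bij_betw_def inj_on_def swp_def by (auto simp: image_def)

lemma prof_swap_mem: assumes "i < n" "j < n" "t \<in> profiles n V"
  shows "t \<circ> swp i j \<in> profiles n V"
proof -
  have "bij_betw (t \<circ> swp i j) {..<n} V"
    using bij_betw_trans[OF swp_bij[OF assms(1,2)]] assms(3) unfolding profiles_def by auto
  moreover have "\<forall>k. n \<le> k \<longrightarrow> (t \<circ> swp i j) k = undefined"
    using assms unfolding profiles_def swp_def by auto
  ultimately show ?thesis unfolding profiles_def by auto
qed

lemma swp_swp: "swp i j (swp i j k) = k" unfolding swp_def by auto

lemma prof_swap: assumes "i < n" "j < n"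
  shows "(\<Sum>t\<in>profiles n V. g (t i)) = (\<Sum>t\<in>profiles n V. g (t j))"
  by (rule sum.reindex_bij_witness[where i="\<lambda>t. t \<circ> swp i j" and j="\<lambda>t. t \<circ> swp i j"])
     (auto simp: swp_swp swp_def comp_def intro: prof_swap_mem[OF assms, unfolded comp_def swp_def])

lemma prof_avg: assumes "i < n"
  shows "real n * (\<Sum>t\<in>profiles n V. g (t i)) = real (card (profiles n V)) * (\<Sum>u\<in>V. g u)"
proof -
  have "real n * (\<Sum>t\<in>profiles n V. g (t i)) = (\<Sum>j<n. \<Sum>t\<in>profiles n V. g (t j))"
  proof -
    have "(\<Sum>j<n. \<Sum>t\<in>profiles n V. g (t j)) = (\<Sum>j<n. \<Sum>t\<in>profiles n V. g (t i))"
      by (rule sum.cong[OF refl]) (metis lessThan_iff prof_swap[OF assms])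
    then show ?thesis by simp
  qed
  also have "\<dots> = (\<Sum>t\<in>profiles n V. \<Sum>j<n. g (t j))" by (rule sum.swap)
  also have "\<dots> = (\<Sum>t\<in>profiles n V. \<Sum>u\<in>V. g u)"
  proof (rule sum.cong[OF refl])
    fix t assume "t \<in> profiles n V"
    then have "bij_betw t {..<n} V" unfolding profiles_def by auto
    then show "(\<Sum>j<n. g (t j)) = (\<Sum>u\<in>V. g u)" using sum.reindex_bij_betw by blast
  qed
  also have "\<dots> = real (card (profiles n V)) * (\<Sum>u\<in>V. g u)" by simp
  finally show ?thesis .
qed

lemma E_inner:
  assumes "0 \<le> \<epsilon>" "\<epsilon> \<le> 1"
  shows "measure_pmf.expectation (map_pmf (\<lambda>s. (t, s)) (map_pmf (\<lambda>b. if b then B else A) (bernoulli_pmf \<epsilon>))) k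
    = \<epsilon> * k (t, B) + (1 - \<epsilon>) * k (t, A)"
proof -
  have "measure_pmf.expectation (map_pmf (\<lambda>s. (t, s)) (map_pmf (\<lambda>b. if b then B else A) (bernoulli_pmf \<epsilon>))) k
     = measure_pmf.expectation (bernoulli_pmf \<epsilon>) (\<lambda>b. k (t, if b then B else A))"
    by (simp only: integral_map_pmf o_def)
  also have "\<dots> = k (t, B) * \<epsilon> + k (t, A) * (1 - \<epsilon>)"
    using integral_bernoulli_pmf[OF assms, of "\<lambda>b. k (t, if b then B else A)"] by simp
  finally show ?thesis by (simp only: mult.commute)
qed

lemma E_joint:
  assumes "finite V" "n = card V" "0 \<le> \<epsilon>" "\<epsilon> \<le> 1"
  shows "measure_pmf.expectation (joint n V (\<lambda>t. map_pmf (\<lambda>b. if b then B else A) (bernoulli_pmf \<epsilon>))) k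
    = (\<Sum>t\<in>profiles n V. \<epsilon> * k (t, B) + (1 - \<epsilon>) * k (t, A)) / real (card (profiles n V))"
proof -
  have ne: "profiles n V \<noteq> {}" using prof_nonempty assms by blast
  have fin: "finite (profiles n V)" using prof_finite assms by blast
  have fs: "\<And>t. finite (set_pmf (map_pmf (\<lambda>s. (t, s)) (map_pmf (\<lambda>b. if b then B else A) (bernoulli_pmf \<epsilon>))))"
    by (simp only: set_map_pmf) (rule finite_imageI, rule finite_imageI, rule finite_subset[of _ UNIV], auto)
  have "measure_pmf.expectation (joint n V (\<lambda>t. map_pmf (\<lambda>b. if b then B else A) (bernoulli_pmf \<epsilon>))) k
     = (\<Sum>t\<in>profiles n V. measure_pmf.expectation (map_pmf (\<lambda>s. (t, s)) (map_pmf (\<lambda>b. if b then B else A) (bernoulli_pmf \<epsilon>))) k /\<^sub>R real (card (profiles n V)))"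
    unfolding joint_def by (rule pmf_expectation_bind_pmf_of_set[OF ne fin fs])
  also have "\<dots> = (\<Sum>t\<in>profiles n V. (\<epsilon> * k (t, B) + (1 - \<epsilon>) * k (t, A)) / real (card (profiles n V)))"
    by (rule sum.cong[OF refl], subst E_inner[OF assms(3,4)]) (simp add: divide_inverse mult.commute)
  also have "\<dots> = (\<Sum>t\<in>profiles n V. \<epsilon> * k (t, B) + (1 - \<epsilon>) * k (t, A)) / real (card (profiles n V))"
    by (simp only: sum_divide_distrib)
  finally show ?thesis .
qed

lemma prob_as_exp: "measure_pmf.prob M E = measure_pmf.expectation M (indicator E)"
  by simp



lemma scheme_ok:
  fixes V :: "'v set" and A :: "'v \<Rightarrow> real" and W :: "'v \<Rightarrow> 'v \<Rightarrow> real"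
  assumes wm: "weight_matrix V W" and nV: "n = card V" and v0: "v0 \<in> V"
    and stA: "stable V W A" and A0: "\<forall>v. v \<notin> V \<longrightarrow> A v = 0"
    and e0: "0 < \<epsilon>" and e1: "\<epsilon> < 1"
    and zp: "0 \<le> (1 - \<epsilon>) * (\<Sum>u\<in>V. A u + hsum V W A u - 1) - \<epsilon> * real n"
    and z: "0 \<in> A ` V"
    and B_def: "B = (\<lambda>u. if u = v0 then 1 else 0 :: real)"
    and \<phi>_def: "\<phi> = (\<lambda>t::nat \<Rightarrow> 'v. map_pmf (\<lambda>b. if b then B else A) (bernoulli_pmf \<epsilon>))"
    and Sig_def: "Sig = insert 1 (A ` V)"
  shows "signaling_scheme n V Sig \<phi> \<and> card Sig \<le> n + 1 \<and> persuasive n V W Sig \<phi>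
         \<and> cost n V \<phi> = \<epsilon> + (1 - \<epsilon>) * (\<Sum>v\<in>V. A v)"
proof -
  have fin: "finite V" using wm by (simp add: weight_matrix_def)
  have Ast: "\<And>v. v \<in> V \<Longrightarrow> A v = max 0 (1 - hsum V W A v)" using stable_iff[OF wm] stA by blast
  have Ann: "\<And>v. v \<in> V \<Longrightarrow> 0 \<le> A v" using Ast by (metis max.cobounded1)
  have hA: "\<And>v. v \<in> V \<Longrightarrow> 0 \<le> hsum V W A v" using hsum_nonneg[OF wm] Ann by blast
  have A1: "\<And>v. v \<in> V \<Longrightarrow> A v \<le> 1" using Ast hA by fastforce
  have Bnn: "\<And>v. 0 \<le> B v" unfolding B_def by simp
  have hB: "\<And>v. v \<in> V \<Longrightarrow> 0 \<le> hsum V W B v" using hsum_nonneg[OF wm] Bnn by blast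
  have hBv0: "hsum V W B v0 = 0" unfolding hsum_def B_def by simp
  have e01: "0 \<le> \<epsilon>" "\<epsilon> \<le> 1" using e0 e1 by auto
  have ne: "profiles n V \<noteq> {}" using prof_nonempty fin nV by blast
  have finP: "finite (profiles n V)" using prof_finite fin by blast
  define N where "N = real (card (profiles n V))"
  have N0: "0 < N" unfolding N_def using ne finP by (simp add: card_gt_0_iff)
  have EJ: "\<And>k. measure_pmf.expectation (joint n V \<phi>) k
      = (\<Sum>t\<in>profiles n V. \<epsilon> * k (t, B) + (1 - \<epsilon>) * k (t, A)) / N"
    unfolding \<phi>_def N_def using E_joint[OF fin nV e01] by blast
  have Sig01: "Sig \<subseteq> {0..1}" unfolding Sig_def using Ann A1 by auto
  have finS: "finite Sig" unfolding Sig_def using fin by simp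
  have SS: "signaling_scheme n V Sig \<phi>"
    unfolding signaling_scheme_def
  proof (intro conjI finS Sig01 ballI)
    fix t :: "nat \<Rightarrow> 'v" assume "t \<in> profiles n V"
    have "set_pmf (\<phi> t) \<subseteq> {A, B}" unfolding \<phi>_def by auto
    moreover have "A \<in> {s. (\<forall>v\<in>V. s v \<in> Sig) \<and> (\<forall>v. v \<notin> V \<longrightarrow> s v = 0)}"
      unfolding Sig_def using A0 by auto
    moreover have "B \<in> {s. (\<forall>v\<in>V. s v \<in> Sig) \<and> (\<forall>v. v \<notin> V \<longrightarrow> s v = 0)}"
      unfolding Sig_def B_def using z v0 by auto
    ultimately show "set_pmf (\<phi> t) \<subseteq> {s. (\<forall>v\<in>V. s v \<in> Sig) \<and> (\<forall>v. v \<notin> V \<longrightarrow> s v = 0)}"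
      by blast
  qed
  have CS: "card Sig \<le> n + 1"
  proof -
    have "card Sig \<le> Suc (card (A ` V))" unfolding Sig_def using fin by (simp add: card_insert_if)
    also have "\<dots> \<le> Suc (card V)" using card_image_le[OF fin] by simp
    finally show ?thesis using nV by simp
  qed
  have sB: "(\<Sum>v\<in>V. \<bar>B v\<bar>) = 1" unfolding B_def using fin v0 by simp
  have sA: "(\<Sum>v\<in>V. \<bar>A v\<bar>) = (\<Sum>v\<in>V. A v)" using Ann by (intro sum.cong) auto
  have CO: "cost n V \<phi> = \<epsilon> + (1 - \<epsilon>) * (\<Sum>v\<in>V. A v)"
  proof -
    have "cost n V \<phi> = (\<Sum>t\<in>profiles n V. \<epsilon> + (1 - \<epsilon>) * (\<Sum>v\<in>V. A v)) / N"
      unfolding cost_def EJ using sB sA by simp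
    also have "\<dots> = \<epsilon> + (1 - \<epsilon>) * (\<Sum>v\<in>V. A v)" using N0 unfolding N_def by simp
    finally show ?thesis .
  qed
  have PE: "persuasive n V W Sig \<phi>"
    unfolding persuasive_def
  proof (intro allI impI ballI)
    fix i x assume i: "i < n" and xS: "x \<in> Sig"
      and pos: "0 < measure_pmf.prob (joint n V \<phi>) (sig_event i x)"
    have tiV: "\<And>t. t \<in> profiles n V \<Longrightarrow> t i \<in> V"
      using i unfolding profiles_def bij_betw_def by auto
    define cB where "cB t = (if B (t i) = x then 1 else 0 :: real)" for t :: "nat \<Rightarrow> 'v"
    define cA where "cA t = (if A (t i) = x then 1 else 0 :: real)" for t :: "nat \<Rightarrow> 'v"
    define Ip where "Ip = (\<Sum>t\<in>profiles n V. \<epsilon> * cB t + (1 - \<epsilon>) * cA t)"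
    define M where "M = (\<Sum>t\<in>profiles n V. \<epsilon> * (cB t * hsum V W B (t i)) + (1 - \<epsilon>) * (cA t * hsum V W A (t i)))"
    have PEq: "measure_pmf.prob (joint n V \<phi>) (sig_event i x) = Ip / N"
      unfolding prob_as_exp EJ Ip_def cB_def cA_def by (simp add: sig_event_def indicator_def of_bool_def)
    have Ip0: "0 < Ip" using pos N0 unfolding PEq by (simp add: zero_less_divide_iff)
    have Qf: "Q n V W \<phi> i y x = y + M / Ip" for y
    proof -
      have num: "measure_pmf.expectation (joint n V \<phi>) (\<lambda>\<omega>. indicator (sig_event i x) \<omega> *
          (case \<omega> of (t, s) \<Rightarrow> y + (\<Sum>v'\<in>V - {t i}. W (t i) v' * s v'))) = (y * Ip + M) / N"
      proof -
        have "\<And>t. \<epsilon> * (indicator (sig_event i x) (t, B) * (y + (\<Sum>v'\<in>V - {t i}. W (t i) v' * B v'))) +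
             (1 - \<epsilon>) * (indicator (sig_event i x) (t, A) * (y + (\<Sum>v'\<in>V - {t i}. W (t i) v' * A v')))
           = y * (\<epsilon> * cB t + (1 - \<epsilon>) * cA t) + (\<epsilon> * (cB t * hsum V W B (t i)) + (1 - \<epsilon>) * (cA t * hsum V W A (t i)))"
          unfolding cB_def cA_def hsum_def by (simp add: sig_event_def indicator_def of_bool_def algebra_simps)
        then have "(\<Sum>t\<in>profiles n V. \<epsilon> * (indicator (sig_event i x) (t, B) * (y + (\<Sum>v'\<in>V - {t i}. W (t i) v' * B v'))) +
             (1 - \<epsilon>) * (indicator (sig_event i x) (t, A) * (y + (\<Sum>v'\<in>V - {t i}. W (t i) v' * A v'))))
           = (\<Sum>t\<in>profiles n V. y * (\<epsilon> * cB t + (1 - \<epsilon>) * cA t) + (\<epsilon> * (cB t * hsum V W B (t i)) + (1 - \<epsilon>) * (cA t * hsum V W A (t i))))"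
          by (intro sum.cong) auto
        also have "\<dots> = y * Ip + M" unfolding Ip_def M_def
          by (simp add: sum.distrib sum_distrib_left distrib_left)
        finally show ?thesis unfolding EJ by simp
      qed
      show ?thesis unfolding Q_def cond_exp_def num PEq using N0 Ip0 by (simp add: field_simps)
    qed
    have x01: "0 \<le> x" "x \<le> 1" using xS Sig01 by auto
    show "1 \<le> Q n V W \<phi> i x x \<and> x = (LEAST y. 0 \<le> y \<and> 1 \<le> Q n V W \<phi> i y x)"
    proof (cases "0 < x")
      case True
      have pt: "\<epsilon> * (cB t * hsum V W B (t i)) + (1 - \<epsilon>) * (cA t * hsum V W A (t i))
          = (1 - x) * (\<epsilon> * cB t + (1 - \<epsilon>) * cA t)" if t: "t \<in> profiles n V" for t
      proof -
        have b: "cB t * hsum V W B (t i) = cB t * (1 - x)"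
        proof (cases "B (t i) = x")
          case True
          then have "t i = v0" "x = 1" using \<open>0 < x\<close> unfolding B_def by (auto split: if_splits)
          then show ?thesis using hBv0 by simp
        qed (simp add: cB_def)
        have a: "cA t * hsum V W A (t i) = cA t * (1 - x)"
        proof (cases "A (t i) = x")
          case True
          then have "max 0 (1 - hsum V W A (t i)) = x" using Ast[OF tiV[OF t]] by simp
          then have "hsum V W A (t i) = 1 - x" using \<open>0 < x\<close> by (auto simp: max_def split: if_splits)
          then show ?thesis by simp
        qed (simp add: cA_def)
        show ?thesis unfolding a b by (simp add: algebra_simps)
      qed
      have "M = (1 - x) * Ip" unfolding M_def Ip_def
        using pt by (simp add: sum_distrib_left)
      then have MI: "M / Ip = 1 - x" using Ip0 by simp
      have L: "(LEAST y. 0 \<le> y \<and> 1 \<le> Q n V W \<phi> i y x) = x"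
        unfolding Qf MI least_lemma2 using x01 by simp
      show ?thesis using L unfolding Qf MI by simp
    next
      case False
      then have x0: "x = 0" using x01 by simp
      define Phi where "Phi u = \<epsilon> * ((if B u = 0 then 1 else 0) * (hsum V W B u - 1))
          + (1 - \<epsilon>) * ((if A u = 0 then 1 else 0) * (hsum V W A u - 1))" for u
      have MP: "M - Ip = (\<Sum>t\<in>profiles n V. Phi (t i))"
        unfolding M_def Ip_def Phi_def cA_def cB_def x0 by (simp add: sum_subtractf[symmetric] algebra_simps)
      have PA: "(if A u = 0 then 1 else 0) * (hsum V W A u - 1) = A u + hsum V W A u - 1" if u: "u \<in> V" for u
      proof (cases "A u = 0")
        case False
        then have "0 < A u" using Ann[OF u] by simp
        then have "A u = 1 - hsum V W A u" using Ast[OF u] by (auto simp: max_def split: if_splits)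
        then show ?thesis using False by simp
      qed simp
      have PB: "- 1 \<le> (if B u = 0 then 1 else 0) * (hsum V W B u - 1)" if u: "u \<in> V" for u
        using hB[OF u] by simp
      have s1: "(\<Sum>u\<in>V. (if A u = 0 then 1 else 0) * (hsum V W A u - 1)) = (\<Sum>u\<in>V. A u + hsum V W A u - 1)"
        using PA by (intro sum.cong) auto
      have s2: "- real n \<le> (\<Sum>u\<in>V. (if B u = 0 then 1 else 0) * (hsum V W B u - 1))"
      proof -
        have "(\<Sum>u\<in>V. (- 1::real)) \<le> (\<Sum>u\<in>V. (if B u = 0 then 1 else 0) * (hsum V W B u - 1))"
          using PB by (intro sum_mono) auto
        then show ?thesis using nV by simp
      qed
      have "(\<Sum>u\<in>V. Phi u) = \<epsilon> * (\<Sum>u\<in>V. (if B u = 0 then 1 else 0) * (hsum V W B u - 1))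
          + (1 - \<epsilon>) * (\<Sum>u\<in>V. (if A u = 0 then 1 else 0) * (hsum V W A u - 1))"
        unfolding Phi_def by (simp add: sum.distrib sum_distrib_left)
      also have "\<dots> \<ge> \<epsilon> * (- real n) + (1 - \<epsilon>) * (\<Sum>u\<in>V. A u + hsum V W A u - 1)"
        unfolding s1 using mult_left_mono[OF s2, of \<epsilon>] e0 by simp
      finally have "0 \<le> (\<Sum>u\<in>V. Phi u)" using zp by simp
      then have "0 \<le> real (card (profiles n V)) * (\<Sum>u\<in>V. Phi u)" by simp
      then have "0 \<le> real n * (\<Sum>t\<in>profiles n V. Phi (t i))" using prof_avg[OF i] by metis
      moreover have "0 < real n" using i by simp
      ultimately have "0 \<le> (\<Sum>t\<in>profiles n V. Phi (t i))" by (simp add: zero_le_mult_iff)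
      then have "Ip \<le> M" using MP by simp
      then have MI: "1 \<le> M / Ip" using Ip0 by simp
      have L: "(LEAST y. 0 \<le> y \<and> 1 \<le> Q n V W \<phi> i y x) = 0"
        unfolding Qf least_lemma2 using MI by simp
      show ?thesis using L MI Qf[of 0] x0 by simp
    qed
  qed
  show ?thesis using SS CS PE CO by blast
qed



lemma swap_identity:
  assumes wm: "weight_matrix V W"
  shows "(\<Sum>v\<in>V. A v * (\<Sum>u\<in>V. W v u * T u)) = (\<Sum>u\<in>V. T u * (\<Sum>w\<in>V. W u w * A w))"
proof -
  have sym: "\<And>u v. u \<in> V \<Longrightarrow> v \<in> V \<Longrightarrow> W v u = W u v" using wm by (simp add: weight_matrix_def)
  have "(\<Sum>v\<in>V. A v * (\<Sum>u\<in>V. W v u * T u)) = (\<Sum>v\<in>V. \<Sum>u\<in>V. A v * W v u * T u)"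
    by (simp add: sum_distrib_left mult.assoc)
  also have "\<dots> = (\<Sum>u\<in>V. \<Sum>v\<in>V. A v * W v u * T u)" by (rule sum.swap)
  also have "\<dots> = (\<Sum>u\<in>V. \<Sum>v\<in>V. T u * (W u v * A v))"
    using sym by (intro sum.cong refl) (simp add: algebra_simps)
  also have "\<dots> = (\<Sum>u\<in>V. T u * (\<Sum>w\<in>V. W u w * A w))"
    by (simp add: sum_distrib_left)
  finally show ?thesis .
qed

lemma F_bound:
  assumes wm: "weight_matrix V W" and stA: "stable V W A"
    and T01: "\<And>v. v \<in> V \<Longrightarrow> 0 \<le> T v \<and> T v \<le> 1" and fT: "feasible V W T"
  shows "(\<Sum>v\<in>V. A v) - (\<Sum>v\<in>V. T v) \<le> (\<Sum>u\<in>V. A u + hsum V W A u - 1)"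
proof -
  have Ast: "\<And>v. v \<in> V \<Longrightarrow> A v = max 0 (1 - hsum V W A v)" using stable_iff[OF wm] stA by blast
  have Ann: "\<And>v. v \<in> V \<Longrightarrow> 0 \<le> A v" using Ast by (metis max.cobounded1)
  have WA: "\<And>u. u \<in> V \<Longrightarrow> (\<Sum>w\<in>V. W u w * A w) = A u + hsum V W A u" using sum_split_W[OF wm] by blast
  have WA1: "\<And>u. u \<in> V \<Longrightarrow> 1 \<le> A u + hsum V W A u" using Ast by (metis add.commute diff_le_eq max.cobounded2)
  have "(\<Sum>v\<in>V. A v) \<le> (\<Sum>v\<in>V. A v * (\<Sum>u\<in>V. W v u * T u))"
  proof (rule sum_mono)
    fix v assume v: "v \<in> V"
    have "1 \<le> (\<Sum>u\<in>V. W v u * T u)" using fT v unfolding feasible_def by blast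
    then show "A v \<le> A v * (\<Sum>u\<in>V. W v u * T u)" using Ann[OF v] mult_left_mono[of 1 _ "A v"] by simp
  qed
  also have "\<dots> = (\<Sum>u\<in>V. T u * (\<Sum>w\<in>V. W u w * A w))" by (rule swap_identity[OF wm])
  also have "\<dots> = (\<Sum>u\<in>V. T u * (A u + hsum V W A u))"
    using WA by (intro sum.cong) auto
  also have "\<dots> \<le> (\<Sum>u\<in>V. T u + (A u + hsum V W A u - 1))"
  proof (rule sum_mono)
    fix u assume u: "u \<in> V"
    have "T u * (A u + hsum V W A u - 1) \<le> 1 * (A u + hsum V W A u - 1)"
      using T01[OF u] WA1[OF u] by (intro mult_right_mono) auto
    then show "T u * (A u + hsum V W A u) \<le> T u + (A u + hsum V W A u - 1)"
      by (simp add: algebra_simps)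
  qed
  also have "\<dots> = (\<Sum>u\<in>V. T u) + (\<Sum>u\<in>V. A u + hsum V W A u - 1)" by (simp add: sum.distrib)
  finally show ?thesis by simp
qed

lemma cost_ge1:
  assumes wm: "weight_matrix V W" and ne: "V \<noteq> {}"
    and T0: "\<And>v. v \<in> V \<Longrightarrow> 0 \<le> T v" and fT: "feasible V W T"
  shows "1 \<le> (\<Sum>v\<in>V. T v)"
proof -
  have fin: "finite V" using wm by (simp add: weight_matrix_def)
  have W1: "\<And>u v. u \<in> V \<Longrightarrow> v \<in> V \<Longrightarrow> W u v \<le> 1" using wm by (simp add: weight_matrix_def)
  have "real (card V) = (\<Sum>u\<in>V. (1::real))" by simp
  also have "\<dots> \<le> (\<Sum>u\<in>V. \<Sum>w\<in>V. W u w * T w)"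
    using fT unfolding feasible_def by (intro sum_mono) auto
  also have "\<dots> = (\<Sum>w\<in>V. \<Sum>u\<in>V. W u w * T w)" by (rule sum.swap)
  also have "\<dots> \<le> (\<Sum>w\<in>V. \<Sum>u\<in>V. 1 * T w)"
    using W1 T0 by (intro sum_mono mult_right_mono) auto
  also have "\<dots> = real (card V) * (\<Sum>w\<in>V. T w)" by (simp add: sum_distrib_left)
  finally have "real (card V) * 1 \<le> real (card V) * (\<Sum>w\<in>V. T w)" by simp
  moreover have "0 < real (card V)" using fin ne by (simp add: card_gt_0_iff)
  ultimately show ?thesis by (simp only: mult_le_cancel_left_pos)
qed

theorem theorem1p4:
  fixes V :: "'v set" and W :: "'v \<Rightarrow> 'v \<Rightarrow> real" and n :: nat
  assumes "weight_matrix V W"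
    and "n = card V"
    and "OPT_IR V W < OPT_stable V W"
  shows "\<exists>(Sig :: real set) \<phi>. signaling_scheme n V Sig \<phi> \<and> card Sig \<le> n + 1 \<and>
           persuasive n V W Sig \<phi> \<and> cost n V \<phi> < OPT_stable V W"
proof -
  note wm = assms(1) and nV = assms(2) and lt = assms(3)
  have fin: "finite V" using wm by (simp add: weight_matrix_def)
  define c where "c \<theta> = (\<Sum>v\<in>V. \<bar>\<theta> v\<bar>)" for \<theta> :: "'v \<Rightarrow> real"
  define IRs where "IRs = {\<theta>. (\<forall>v\<in>V. 0 \<le> \<theta> v \<and> \<theta> v \<le> 1) \<and> feasible V W \<theta>}"
  define STs where "STs = {\<theta>. stable V W \<theta>}"
  have OI: "OPT_IR V W = Inf (c ` IRs)" unfolding OPT_IR_def c_def IRs_def by simp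
  have OS: "OPT_stable V W = Inf (c ` STs)" unfolding OPT_stable_def c_def STs_def by simp
  have one: "(\<lambda>_. 1) \<in> IRs"
  proof -
    have "feasible V W (\<lambda>_. 1)" unfolding feasible_def
    proof (intro conjI ballI)
      fix v assume v: "v \<in> V"
      have "0 \<le> hsum V W (\<lambda>_. 1) v" using hsum_nonneg[OF wm v] by simp
      then show "1 \<le> (\<Sum>u\<in>V. W v u * 1)" using sum_split_W[OF wm v, of "\<lambda>_. 1"] by simp
    qed simp
    then show ?thesis unfolding IRs_def by simp
  qed
  obtain S0 where S0: "stable V W S0" and "\<forall>v. v \<notin> V \<longrightarrow> S0 v = 0" using stable_exists[OF wm] by blast
  have STne: "c ` STs \<noteq> {}" using S0 unfolding STs_def by blast
  have bdd: "bdd_below (c ` STs)" unfolding c_def by (rule bdd_belowI[of _ 0]) (auto intro: sum_nonneg)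
  have Vne: "V \<noteq> {}"
  proof
    assume V0: "V = {}"
    have "c ` IRs = {0}" using one unfolding c_def V0 by auto
    moreover have "c ` STs = {0}" using STne unfolding c_def V0 by auto
    ultimately show False using lt OI OS by simp
  qed
  have IRne: "c ` IRs \<noteq> {}" using one by blast
  have "\<exists>y\<in>c ` IRs. y < OPT_stable V W" using cInf_lessD[OF IRne] lt OI by simp
  then obtain T where T: "T \<in> IRs" and cT: "c T < OPT_stable V W" by blast
  have T01: "\<And>v. v \<in> V \<Longrightarrow> 0 \<le> T v \<and> T v \<le> 1" and fT: "feasible V W T" using T unfolding IRs_def by auto
  have cT': "c T = (\<Sum>v\<in>V. T v)" unfolding c_def using T01 by (intro sum.cong) auto
  have cT1: "1 \<le> c T" unfolding cT' using cost_ge1[OF wm Vne _ fT] T01 by blast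
  define OS' where "OS' = OPT_stable V W"
  define \<delta> where "\<delta> = OS' - c T"
  have d0: "0 < \<delta>" unfolding \<delta>_def OS'_def using cT by simp
  have n0: "0 < real n" using nV fin Vne by (simp add: card_gt_0_iff)
  define \<epsilon> where "\<epsilon> = \<delta> / (\<delta> + real n)"
  have e0: "0 < \<epsilon>" unfolding \<epsilon>_def using d0 n0 by simp
  have e1: "\<epsilon> < 1" unfolding \<epsilon>_def using d0 n0 by simp
  have OS1: "1 < OS'" using cT1 d0 unfolding \<delta>_def by simp
  define \<eta> where "\<eta> = \<epsilon> * (OS' - 1)"
  have eta0: "0 < \<eta>" unfolding \<eta>_def using e0 OS1 by simp
  have "\<exists>y\<in>c ` STs. y < OS' + \<eta>" using cInf_lessD[OF STne] eta0 OS unfolding OS'_def by simp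
  then obtain A where A: "A \<in> STs" and cA: "c A < OS' + \<eta>" by blast
  have stA: "stable V W A" using A unfolding STs_def by simp
  have cAge: "OS' \<le> c A" unfolding OS'_def OS using A bdd by (intro cInf_lower) auto
  define A' where "A' u = (if u \<in> V then A u else 0)" for u
  have hs: "\<And>u. hsum V W A' u = hsum V W A u" unfolding hsum_def A'_def by (intro sum.cong) auto
  have stA': "stable V W A'" using stA unfolding stable_iff[OF wm] hs unfolding A'_def by simp
  have A'0: "\<forall>v. v \<notin> V \<longrightarrow> A' v = 0" unfolding A'_def by simp
  have Ann: "\<And>v. v \<in> V \<Longrightarrow> 0 \<le> A' v" using stA' unfolding stable_iff[OF wm] by (metis max.cobounded1)
  have cA': "c A = (\<Sum>v\<in>V. A' v)" unfolding c_def using Ann by (intro sum.cong) (auto simp: A'_def)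
  define F where "F = (\<Sum>u\<in>V. A' u + hsum V W A' u - 1)"
  have Fb: "\<delta> \<le> F"
    using F_bound[OF wm stA' T01 fT] cA' cT' cAge unfolding F_def \<delta>_def by linarith
  have zp: "0 \<le> (1 - \<epsilon>) * F - \<epsilon> * real n"
  proof -
    have "(1 - \<epsilon>) * \<delta> \<le> (1 - \<epsilon>) * F" using Fb e1 by (intro mult_left_mono) auto
    moreover have "(1 - \<epsilon>) * \<delta> = \<epsilon> * real n" unfolding \<epsilon>_def using d0 n0 by (simp add: field_simps)
    ultimately show ?thesis by simp
  qed
  have z: "0 \<in> A' ` V"
  proof (rule ccontr)
    assume nz: "0 \<notin> A' ` V"
    have "\<And>u. u \<in> V \<Longrightarrow> A' u + hsum V W A' u - 1 = 0"
    proof -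
      fix u assume u: "u \<in> V"
      have "A' u \<noteq> 0" using nz u by force
      then have "0 < A' u" using Ann[OF u] by simp
      moreover have "A' u = max 0 (1 - hsum V W A' u)" using stA' u unfolding stable_iff[OF wm] by blast
      ultimately show "A' u + hsum V W A' u - 1 = 0" by (auto simp: max_def split: if_splits)
    qed
    then have "F = 0" unfolding F_def by simp
    then show False using Fb d0 by simp
  qed
  obtain v0 where v0: "v0 \<in> V" using Vne by blast
  define B where "B = (\<lambda>u. if u = v0 then 1 else 0 :: real)"
  define \<phi> where "\<phi> = (\<lambda>t::nat \<Rightarrow> 'v. map_pmf (\<lambda>b. if b then B else A') (bernoulli_pmf \<epsilon>))"
  define Sig where "Sig = insert 1 (A' ` V)"
  have main: "signaling_scheme n V Sig \<phi> \<and> card Sig \<le> n + 1 \<and> persuasive n V W Sig \<phi>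
         \<and> cost n V \<phi> = \<epsilon> + (1 - \<epsilon>) * (\<Sum>v\<in>V. A' v)"
    by (rule scheme_ok[OF wm nV v0 stA' A'0 e0 e1 zp[unfolded F_def] z B_def \<phi>_def Sig_def])
  have "cost n V \<phi> < OS'"
  proof -
    have "(1 - \<epsilon>) * c A < (1 - \<epsilon>) * (OS' + \<eta>)" using cA e1 by simp
    moreover have "(1 - \<epsilon>) * \<eta> \<le> \<eta>" using eta0 e0 by (simp add: mult_le_cancel_right1)
    ultimately have "\<epsilon> + (1 - \<epsilon>) * c A < OS'" unfolding \<eta>_def by (simp add: algebra_simps)
    then show ?thesis using main cA' by simp
  qed
  then show ?thesis using main unfolding OS'_def by blast
qed

end
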